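(* Let $X$ be the solution of $$\mathrm{d}X(t)=\sum_{m=0}^M\big(A_mX(t)+g_m(t,X(t))\big)\star\mathrm{d}W_m(t),\qquad X(t_0)=x_0,$$ where the matrices $A_0,\dots,A_M\in\mathbb{R}^{d\times d}$ pairwise commute. Let $V^0_n$, $n=0,\dots,N$, be the numerical approximation of the globally transformed SDE for $V^0$ (defined in the context) by some one-step method of mean-square order $p$, i.e. there is $c\in\mathbb{R}$ such that for all $N\in\mathbb{N}$ and $n\in\{0,\dots,N\}$, $\sqrt{\mathbb{E}\|V^0_n-V^0(t_n)\|_2^2}\le ch^p$. Assume moreover that the Wiener approximations are exact, $W^n=W(t_n)$, so that $\bar L^0_n=L^0(t_n)$. Then there exists $\tilde c\in\mathbb{R}$ such that the approximation $Y_n=e^{L^0(t_n)}V^0_n$ satisfies, for all $N\in\mathbb{N}$ and $n\in\{0,\dots,N\}$, $$\mathbb{E}\,\|Y_n-X(t_n)\|_2\le\tilde ch^p.$$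
   Context: Setting: $d,M\in\mathbb{N}$, $t_0<T$; $W_1,\dots,W_M$ independent scalar Wiener processes, $W_0(t)=t$, $W(t)=(W_m(t))_{m=0}^M$; $g_m:[t_0,T]\times\mathbb{R}^d\to\mathbb{R}^d$ such that the SDE has a unique solution. The integrals $\star\,\mathrm{d}W_m$ are all Itô ($\gamma^\star=\tfrac12$) or all Stratonovich ($\gamma^\star=0$). Equidistant grid $h=(T-t_0)/N$, $t_n=t_0+nh$. Define $\tilde g_0=g_0-2\gamma^\star\sum_{m=1}^MA_mg_m$, $\tilde g_m=g_m$ ($m\ge1$), $L^0(t)=(A_0-\gamma^\star\sum_{m=1}^MA_m^2)(t-t_0)+\sum_{m=1}^MA_m(W_m(t)-W_m(t_0))$, and $V^0(t)=e^{-L^0(t)}X(t)$; $V^0$ solves $\mathrm{d}V^0=\sum_{m=0}^M e^{-L^0(t)}\tilde g_m(t,e^{L^0(t)}V^0)\star\mathrm{d}W_m$, $V^0(t_0)=x_0$ (the globally transformed SDE). If $W^n$ denotes the approximation of $W(t_n)$ used by the one-step method, $\bar L^0_n=(A_0-\gamma^\star\sum_{m=1}^MA_m^2)(t_n-t_0)+\sum_{m=1}^MA_m(W^n_m-W^0_m)$. $\|\cdot\|_2$ is the Euclidean norm. *)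

theory Defs
  imports "HOL-Probability.Probability"
begin

definition matpow :: "real^'n^'n \<Rightarrow> nat \<Rightarrow> real^'n^'n" where
  "matpow A k = (((**) A) ^^ k) (mat 1)"

definition mat_exp :: "real^'n^'n \<Rightarrow> real^'n^'n" where
  "mat_exp A = (\<Sum>k. (1 / fact k) *\<^sub>R matpow A k)"

definition wiener_process_on :: "'a measure \<Rightarrow> real set \<Rightarrow> (real \<Rightarrow> 'a \<Rightarrow> real) \<Rightarrow> bool" where
  "wiener_process_on M S W \<longleftrightarrow>
     prob_space M \<and>
     (\<forall>t\<in>S. W t \<in> borel_measurable M) \<and>
     (AE \<omega> in M. continuous_on S (\<lambda>t. W t \<omega>)) \<and>
     (\<forall>s\<in>S. \<forall>t\<in>S. s < t \<longrightarrow>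
        distributed M lborel (\<lambda>\<omega>. W t \<omega> - W s \<omega>) (\<lambda>x. ennreal (normal_density 0 (sqrt (t - s)) x))) \<and>
     (\<forall>(k::nat) (ts::nat \<Rightarrow> real). (\<forall>i\<le>k. ts i \<in> S) \<and> (\<forall>i<k. ts i < ts (Suc i)) \<longrightarrow>
        prob_space.indep_vars M (\<lambda>_. borel) (\<lambda>i \<omega>. W (ts (Suc i)) \<omega> - W (ts i) \<omega>) {..<k})"

end

theory Submission
  imports Defs
begin


lemma abs_entry_le: fixes A :: "real^'n^'m" shows "\<bar>A$i$j\<bar> \<le> norm A"
proof -
  have "\<bar>A$i$j\<bar> \<le> norm (A$i)" by (rule component_le_norm_cart)
  also have "\<dots> \<le> norm A" by (rule Finite_Cartesian_Product.norm_nth_le)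
  finally show ?thesis .
qed

lemma norm_le_sum_rows: fixes A :: "real^'n^'m" shows "norm A \<le> (\<Sum>i\<in>UNIV. norm (A$i))"
  by (simp add: norm_vec_def L2_set_le_sum)

lemma norm_mm: fixes A B :: "real^'n^'n"
  shows "norm (A ** B) \<le> real CARD('n)^3 * norm A * norm B"
proof -
  have e: "\<bar>(A**B)$i$j\<bar> \<le> real CARD('n) * (norm A * norm B)" for i j
  proof -
    have "\<bar>(A**B)$i$j\<bar> = \<bar>\<Sum>k\<in>UNIV. A$i$k * B$k$j\<bar>" by (simp add: matrix_matrix_mult_def)
    also have "\<dots> \<le> (\<Sum>k\<in>UNIV. \<bar>A$i$k\<bar> * \<bar>B$k$j\<bar>)"
      by (rule order_trans[OF sum_abs]) (simp add: abs_mult)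
    also have "\<dots> \<le> (\<Sum>k\<in>(UNIV::'n set). norm A * norm B)"
      by (intro sum_mono mult_mono abs_entry_le) auto
    finally show ?thesis by simp
  qed
  have r: "norm ((A**B)$i) \<le> real CARD('n) * (real CARD('n) * (norm A * norm B))" for i
  proof -
    have "norm ((A**B)$i) \<le> (\<Sum>j\<in>UNIV. \<bar>(A**B)$i$j\<bar>)" by (rule norm_le_l1_cart)
    also have "\<dots> \<le> (\<Sum>j\<in>(UNIV::'n set). real CARD('n) * (norm A * norm B))"
      by (intro sum_mono e)
    finally show ?thesis by simp
  qed
  have "norm (A ** B) \<le> (\<Sum>i\<in>UNIV. norm ((A**B)$i))" by (rule norm_le_sum_rows)
  also have "\<dots> \<le> (\<Sum>i\<in>(UNIV::'n set). real CARD('n) * (real CARD('n) * (norm A * norm B)))"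
    by (intro sum_mono r)
  finally show ?thesis by (simp add: power3_eq_cube mult_ac)
qed

lemma norm_mv: fixes A :: "real^'n^'n" and x :: "real^'n"
  shows "norm (A *v x) \<le> real CARD('n)^3 * norm A * norm x"
proof -
  have e: "\<bar>(A*v x)$i\<bar> \<le> real CARD('n) * (norm A * norm x)" for i
  proof -
    have "\<bar>(A*v x)$i\<bar> = \<bar>\<Sum>k\<in>UNIV. A$i$k * x$k\<bar>" by (simp add: matrix_vector_mult_def)
    also have "\<dots> \<le> (\<Sum>k\<in>UNIV. \<bar>A$i$k\<bar> * \<bar>x$k\<bar>)"
      by (rule order_trans[OF sum_abs]) (simp add: abs_mult)
    also have "\<dots> \<le> (\<Sum>k\<in>(UNIV::'n set). norm A * norm x)"
      by (intro sum_mono mult_mono abs_entry_le component_le_norm_cart) auto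
    finally show ?thesis by simp
  qed
  have "norm (A *v x) \<le> (\<Sum>i\<in>UNIV. \<bar>(A*v x)$i\<bar>)" by (rule norm_le_l1_cart)
  also have "\<dots> \<le> (\<Sum>i\<in>(UNIV::'n set). real CARD('n) * (norm A * norm x))"
    by (intro sum_mono e)
  also have "\<dots> = real CARD('n)^2 * (norm A * norm x)" by (simp add: power2_eq_square)
  also have "\<dots> \<le> real CARD('n)^3 * (norm A * norm x)"
  proof (rule mult_right_mono)
    have "(1::real) \<le> real CARD('n)" by (simp add: Suc_leI)
    then show "real CARD('n)^2 \<le> real CARD('n)^3" by (simp add: power_increasing)
  qed simp
  finally show ?thesis by (simp add: mult_ac)
qed

lemma bb_mm: "bounded_bilinear ((**) :: real^'n^'n \<Rightarrow> real^'n^'n \<Rightarrow> real^'n^'n)"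
  apply (rule bounded_bilinear.intro)
  subgoal by (vector matrix_matrix_mult_def sum.distrib[symmetric] field_simps)
  subgoal by (rule matrix_add_ldistrib)
  subgoal by (simp add: scalar_matrix_assoc)
  subgoal by (simp add: matrix_scalar_ac scalar_matrix_assoc)
  subgoal
    apply (rule exI[of _ "real CARD('n)^3"])
    apply (intro allI)
    subgoal for a b using norm_mm[of a b] by (simp add: mult_ac)
    done
  done

lemma matpow_Suc: "matpow A (Suc k) = A ** matpow A k"
  by (simp add: matpow_def)

lemma matpow_0: "matpow A 0 = mat 1"
  by (simp add: matpow_def)

lemma matpow_add: "matpow A i ** matpow A j = matpow A (i + j)"
  by (induction i) (simp_all add: matpow_0 matpow_Suc matrix_mul_assoc[symmetric])

lemma neg_mm: fixes B :: "real^'n^'m" shows "(- B) ** C = - (B ** C)"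
  by (simp add: matrix_matrix_mult_def vec_eq_iff sum_negf)

lemma matpow_neg: fixes A :: "real^'n^'n" shows "matpow (-A) k = (-1)^k *\<^sub>R matpow A k"
proof (induction k)
  case 0 then show ?case by (simp add: matpow_0)
next
  case (Suc k)
  then show ?case
    by (simp add: matpow_Suc neg_mm matrix_scalar_ac scalar_matrix_assoc[symmetric])
qed

lemma norm_matpow: fixes A :: "real^'n^'n"
  shows "norm (matpow A k) \<le> norm (mat 1 :: real^'n^'n) * (real CARD('n)^3 * norm A)^k"
proof (induction k)
  case 0 then show ?case by (simp add: matpow_0)
next
  case (Suc k)
  have "norm (matpow A (Suc k)) \<le> real CARD('n)^3 * norm A * norm (matpow A k)"
    by (simp add: matpow_Suc norm_mm)
  also have "\<dots> \<le> real CARD('n)^3 * norm A * (norm (mat 1 :: real^'n^'n) * (real CARD('n)^3 * norm A)^k)"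
    by (intro mult_left_mono Suc) auto
  finally show ?case by (simp add: mult_ac)
qed

lemma summable_matexp: fixes A :: "real^'n^'n"
  shows "summable (\<lambda>k. norm ((1 / fact k) *\<^sub>R matpow A k))"
proof (rule summable_comparison_test[where g="\<lambda>k. norm (mat 1 :: real^'n^'n) * ((real CARD('n)^3 * norm A)^k /\<^sub>R fact k)"])
  show "\<exists>N. \<forall>k\<ge>N. norm (norm ((1 / fact k) *\<^sub>R matpow A k)) \<le> norm (mat 1 :: real^'n^'n) * ((real CARD('n)^3 * norm A)^k /\<^sub>R fact k)"
  proof (intro exI allI impI)
    fix k :: nat
    have "norm (norm ((1 / fact k) *\<^sub>R matpow A k)) = norm (matpow A k) / fact k" by simp
    also have "\<dots> \<le> norm (mat 1 :: real^'n^'n) * (real CARD('n)^3 * norm A)^k / fact k"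
      by (intro divide_right_mono norm_matpow) auto
    finally show "norm (norm ((1 / fact k) *\<^sub>R matpow A k)) \<le> norm (mat 1 :: real^'n^'n) * ((real CARD('n)^3 * norm A)^k /\<^sub>R fact k)"
      by (simp add: divide_inverse mult_ac)
  qed
  show "summable (\<lambda>k. norm (mat 1 :: real^'n^'n) * ((real CARD('n)^3 * norm A)^k /\<^sub>R fact k))"
    by (intro summable_mult summable_exp_generic)
qed

lemma norm_matexp: fixes A :: "real^'n^'n"
  shows "norm (mat_exp A) \<le> norm (mat 1 :: real^'n^'n) * exp (real CARD('n)^3 * norm A)"
proof -
  have "norm (mat_exp A) \<le> (\<Sum>k. norm ((1 / fact k) *\<^sub>R matpow A k))"
    unfolding mat_exp_def by (rule summable_norm[OF summable_matexp])
  also have "\<dots> \<le> (\<Sum>k. norm (mat 1 :: real^'n^'n) * ((real CARD('n)^3 * norm A)^k /\<^sub>R fact k))"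
  proof (rule suminf_le)
    fix k :: nat
    have "norm ((1 / fact k) *\<^sub>R matpow A k) = norm (matpow A k) / fact k" by simp
    also have "\<dots> \<le> norm (mat 1 :: real^'n^'n) * (real CARD('n)^3 * norm A)^k / fact k"
      by (intro divide_right_mono norm_matpow) auto
    finally show "norm ((1 / fact k) *\<^sub>R matpow A k) \<le> norm (mat 1 :: real^'n^'n) * ((real CARD('n)^3 * norm A)^k /\<^sub>R fact k)"
      by (simp add: divide_inverse mult_ac)
  qed (intro summable_matexp summable_mult summable_exp_generic)+
  also have "\<dots> = norm (mat 1 :: real^'n^'n) * (\<Sum>k. (real CARD('n)^3 * norm A)^k /\<^sub>R fact k)"
    by (rule suminf_mult[OF summable_exp_generic])
  also have "\<dots> = norm (mat 1 :: real^'n^'n) * exp (real CARD('n)^3 * norm A)"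
    by (simp add: exp_def)
  finally show ?thesis .
qed

lemma Cauchy_product_mm:
  fixes a b :: "nat \<Rightarrow> real^'n^'n"
  assumes a: "summable (\<lambda>k. norm (a k))"
    and b: "summable (\<lambda>k. norm (b k))"
  shows "(\<lambda>k. \<Sum>i\<le>k. a i ** b (k - i)) sums ((\<Sum>k. a k) ** (\<Sum>k. b k))"
proof -
  interpret bb: bounded_bilinear "(**) :: real^'n^'n \<Rightarrow> real^'n^'n \<Rightarrow> real^'n^'n" by (rule bb_mm)
  define K where "K = real CARD('n)^3"
  let ?S1 = "\<lambda>n::nat. {..<n} \<times> {..<n}"
  let ?S2 = "\<lambda>n::nat. {(i,j). i + j < n}"
  have S1_mono: "\<And>m n. m \<le> n \<Longrightarrow> ?S1 m \<subseteq> ?S1 n" by auto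
  have S2_le_S1: "\<And>n. ?S2 n \<subseteq> ?S1 n" by auto
  have S1_le_S2: "\<And>n. ?S1 (n div 2) \<subseteq> ?S2 n" by auto
  have finite_S1: "\<And>n. finite (?S1 n)" by simp
  with S2_le_S1 have finite_S2: "\<And>n. finite (?S2 n)" by (rule finite_subset)

  let ?g = "\<lambda>(i,j). a i ** b j"
  let ?f = "\<lambda>(i,j). norm (a i) * norm (b j)"
  have f_nonneg: "\<And>x. 0 \<le> ?f x" by auto
  then have norm_sum_f: "\<And>A. norm (sum ?f A) = sum ?f A"
    unfolding real_norm_def
    by (simp only: abs_of_nonneg sum_nonneg [rule_format])

  have "(\<lambda>n. (\<Sum>k<n. a k) ** (\<Sum>k<n. b k)) \<longlonglongrightarrow> (\<Sum>k. a k) ** (\<Sum>k. b k)"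
    by (intro bb.tendsto summable_LIMSEQ summable_norm_cancel [OF a] summable_norm_cancel [OF b])
  moreover have "\<And>n. (\<Sum>k<n. a k) ** (\<Sum>k<n. b k) = sum ?g (?S1 n)"
  proof -
    fix n
    have "(\<Sum>k<n. a k) ** (\<Sum>k<n. b k) = (\<Sum>i<n. \<Sum>j<n. a i ** b j)"
      by (simp only: bb.sum_left) (simp only: bb.sum_right)
    also have "\<dots> = sum ?g (?S1 n)" by (rule sum.cartesian_product)
    finally show "(\<Sum>k<n. a k) ** (\<Sum>k<n. b k) = sum ?g (?S1 n)" .
  qed
  ultimately have 1: "(\<lambda>n. sum ?g (?S1 n)) \<longlonglongrightarrow> (\<Sum>k. a k) ** (\<Sum>k. b k)"
    by simp

  have "(\<lambda>n. (\<Sum>k<n. norm (a k)) * (\<Sum>k<n. norm (b k))) \<longlonglongrightarrow> (\<Sum>k. norm (a k)) * (\<Sum>k. norm (b k))"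
    using a b by (intro tendsto_mult summable_LIMSEQ)
  then have "(\<lambda>n. sum ?f (?S1 n)) \<longlonglongrightarrow> (\<Sum>k. norm (a k)) * (\<Sum>k. norm (b k))"
    by (simp only: sum_product sum.Sigma [rule_format] finite_lessThan)
  then have "convergent (\<lambda>n. sum ?f (?S1 n))"
    by (rule convergentI)
  then have Cauchy: "Cauchy (\<lambda>n. sum ?f (?S1 n))"
    by (rule convergent_Cauchy)
  have "Zfun (\<lambda>n. sum ?f (?S1 n - ?S2 n)) sequentially"
  proof (rule ZfunI, simp only: eventually_sequentially norm_sum_f)
    fix r :: real
    assume r: "0 < r"
    from CauchyD [OF Cauchy r] obtain N
      where "\<forall>m\<ge>N. \<forall>n\<ge>N. norm (sum ?f (?S1 m) - sum ?f (?S1 n)) < r" ..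
    then have "\<And>m n. N \<le> n \<Longrightarrow> n \<le> m \<Longrightarrow> norm (sum ?f (?S1 m - ?S1 n)) < r"
      by (simp only: sum_diff finite_S1 S1_mono)
    then have N: "\<And>m n. N \<le> n \<Longrightarrow> n \<le> m \<Longrightarrow> sum ?f (?S1 m - ?S1 n) < r"
      by (simp only: norm_sum_f)
    show "\<exists>N. \<forall>n\<ge>N. sum ?f (?S1 n - ?S2 n) < r"
    proof (intro exI allI impI)
      fix n
      assume "2 * N \<le> n"
      then have n: "N \<le> n div 2" by simp
      have "sum ?f (?S1 n - ?S2 n) \<le> sum ?f (?S1 n - ?S1 (n div 2))"
        by (intro sum_mono2 finite_Diff finite_S1 f_nonneg Diff_mono subset_refl S1_le_S2)
      also have "\<dots> < r"
        using n div_le_dividend by (rule N)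
      finally show "sum ?f (?S1 n - ?S2 n) < r" .
    qed
  qed
  then have "Zfun (\<lambda>n. K * sum ?f (?S1 n - ?S2 n)) sequentially"
    by (rule bounded_linear.Zfun[OF bounded_linear_mult_right])
  then have "Zfun (\<lambda>n. sum ?g (?S1 n - ?S2 n)) sequentially"
  proof (rule Zfun_le [rule_format])
    fix n
    have "norm (sum ?g (?S1 n - ?S2 n)) \<le> (\<Sum>x\<in>?S1 n - ?S2 n. norm (?g x))"
      by (rule norm_sum)
    also have "\<dots> \<le> (\<Sum>x\<in>?S1 n - ?S2 n. K * ?f x)"
      by (intro sum_mono) (auto simp: K_def mult_ac intro: order_trans[OF norm_mm])
    also have "\<dots> = K * sum ?f (?S1 n - ?S2 n)" by (simp add: sum_distrib_left)
    also have "\<dots> \<le> norm (K * sum ?f (?S1 n - ?S2 n))" by simp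
    finally show "norm (sum ?g (?S1 n - ?S2 n)) \<le> norm (K * sum ?f (?S1 n - ?S2 n))" .
  qed
  then have 2: "(\<lambda>n. sum ?g (?S1 n) - sum ?g (?S2 n)) \<longlonglongrightarrow> 0"
    unfolding tendsto_Zfun_iff diff_0_right
    by (simp only: sum_diff finite_S1 S2_le_S1)
  with 1 have "(\<lambda>n. sum ?g (?S2 n)) \<longlonglongrightarrow> (\<Sum>k. a k) ** (\<Sum>k. b k)"
    by (rule Lim_transform2)
  then show ?thesis
    by (simp only: sums_def sum.triangle_reindex)
qed


lemma binom_alt: "(\<Sum>i\<le>k. (-1::real)^(k-i) / (fact i * fact (k-i))) = (if k = 0 then 1 else 0)"
proof -
  have "(\<Sum>i\<le>k. (-1::real)^(k-i) / (fact i * fact (k-i)))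
      = (\<Sum>i\<le>k. (1 / fact k) * (of_nat (k choose i) * 1^i * (-1)^(k-i)))"
    by (intro sum.cong refl) (simp add: binomial_fact)
  also have "\<dots> = (1 / fact k) * (\<Sum>i\<le>k. of_nat (k choose i) * 1^i * (-1::real)^(k-i))"
    by (rule sum_distrib_left[symmetric])
  also have "\<dots> = (1 / fact k) * (1 + (-1::real))^k"
    by (simp only: binomial_ring)
  also have "\<dots> = (if k = 0 then 1 else 0)" by simp
  finally show ?thesis .
qed

lemma matexp_inv: fixes A :: "real^'n^'n" shows "mat_exp A ** mat_exp (-A) = mat 1"
proof -
  define a where "a = (\<lambda>k. (1 / fact k) *\<^sub>R matpow A k)"
  define b where "b = (\<lambda>k. (1 / fact k) *\<^sub>R matpow (-A) k)"
  have "(\<lambda>k. \<Sum>i\<le>k. a i ** b (k - i)) sums ((\<Sum>k. a k) ** (\<Sum>k. b k))"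
    unfolding a_def b_def by (intro Cauchy_product_mm summable_matexp)
  moreover have "(\<lambda>k. \<Sum>i\<le>k. a i ** b (k - i)) = (\<lambda>k. if k = 0 then mat 1 else 0)"
  proof
    fix k
    have "(\<Sum>i\<le>k. a i ** b (k - i)) = (\<Sum>i\<le>k. ((-1::real)^(k-i) / (fact i * fact (k-i))) *\<^sub>R matpow A k)"
    proof (intro sum.cong refl)
      fix i assume "i \<in> {..k}"
      then have ik: "i + (k - i) = k" by simp
      show "a i ** b (k - i) = ((-1::real)^(k-i) / (fact i * fact (k-i))) *\<^sub>R matpow A k"
        unfolding a_def b_def matpow_neg
        by (simp add: matrix_scalar_ac scalar_matrix_assoc[symmetric] matpow_add ik)
    qed
    also have "\<dots> = (\<Sum>i\<le>k. ((-1::real)^(k-i) / (fact i * fact (k-i)))) *\<^sub>R matpow A k"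
      by (simp add: scaleR_sum_left)
    also have "\<dots> = (if k = 0 then mat 1 else 0)"
      by (simp add: binom_alt matpow_0)
    finally show "(\<Sum>i\<le>k. a i ** b (k - i)) = (if k = 0 then mat 1 else 0)" .
  qed
  ultimately have "(\<lambda>k. if k = 0 then mat 1 else 0) sums (mat_exp A ** mat_exp (-A))"
    by (simp add: mat_exp_def a_def b_def)
  moreover have "(\<lambda>k. if k = 0 then mat 1 else (0::real^'n^'n)) sums mat 1"
    using sums_single[of 0 "\<lambda>_. mat 1 :: real^'n^'n"] by simp
  ultimately show ?thesis by (rule sums_unique2)
qed

lemma matexp_cancel: fixes A :: "real^'n^'n" shows "mat_exp A *v (mat_exp (-A) *v x) = x"
  by (simp add: matrix_vector_mul_assoc matexp_inv)

lemma norm_matexp_mv: fixes A :: "real^'n^'n"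
  shows "norm (mat_exp A *v x) \<le> real CARD('n)^3 * norm (mat 1 :: real^'n^'n) * exp (real CARD('n)^3 * norm A) * norm x"
proof -
  have "norm (mat_exp A *v x) \<le> real CARD('n)^3 * norm (mat_exp A) * norm x" by (rule norm_mv)
  also have "\<dots> \<le> real CARD('n)^3 * (norm (mat 1 :: real^'n^'n) * exp (real CARD('n)^3 * norm A)) * norm x"
    by (intro mult_right_mono mult_left_mono norm_matexp) auto
  finally show ?thesis by (simp add: mult_ac)
qed



lemma exp_sum_le:
  fixes x :: "nat \<Rightarrow> real"
  assumes fin: "finite I" and ne: "I \<noteq> {}" and nn: "\<And>m. m \<in> I \<Longrightarrow> 0 \<le> x m"
  shows "exp (\<Sum>m\<in>I. x m) \<le> (\<Sum>m\<in>I. exp (real (card I) * x m))"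
proof -
  define mx where "mx = Max (x ` I)"
  have mxin: "mx \<in> x ` I" unfolding mx_def using fin ne by (intro Max_in) auto
  then obtain j where j: "j \<in> I" "x j = mx" by auto
  have "(\<Sum>m\<in>I. x m) \<le> real (card I) * mx"
    by (rule sum_bounded_above) (auto simp: mx_def fin)
  then have "exp (\<Sum>m\<in>I. x m) \<le> exp (real (card I) * x j)" using j by simp
  also have "\<dots> \<le> (\<Sum>m\<in>I. exp (real (card I) * x m))"
    using fin j(1) by (intro member_le_sum) auto
  finally show ?thesis .
qed

lemma gauss_pointwise:
  fixes s b x :: real
  assumes s: "0 < s" and b: "0 \<le> b"
  shows "normal_density 0 (sqrt s) x * exp (b * \<bar>x\<bar>)
     \<le> sqrt 2 * exp (b\<^sup>2 * s) * normal_density 0 (sqrt 2 * sqrt s) x"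
proof -
  have key: "- x\<^sup>2 / (2 * s) + b * \<bar>x\<bar> \<le> b\<^sup>2 * s + - x\<^sup>2 / (4 * s)"
  proof -
    have "b\<^sup>2 * s + - x\<^sup>2 / (4 * s) - (- x\<^sup>2 / (2 * s) + b * \<bar>x\<bar>) = (2 * b * s - \<bar>x\<bar>)\<^sup>2 / (4 * s)"
      using s by (simp add: field_simps power2_eq_square abs_mult_self_eq)
    moreover have "0 \<le> (2 * b * s - \<bar>x\<bar>)\<^sup>2 / (4 * s)" using s by simp
    ultimately show ?thesis by linarith
  qed
  have lhs: "normal_density 0 (sqrt s) x * exp (b * \<bar>x\<bar>) = 1 / sqrt (2 * pi * s) * exp (- x\<^sup>2 / (2 * s) + b * \<bar>x\<bar>)"
    using s by (simp add: normal_density_def mult_exp_exp)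
  have "sqrt (2 * pi * (sqrt 2 * sqrt s)\<^sup>2) = sqrt 2 * sqrt (2 * pi * s)"
    using s by (simp add: power_mult_distrib real_sqrt_mult[symmetric] mult_ac)
  then have rhs: "sqrt 2 * exp (b\<^sup>2 * s) * normal_density 0 (sqrt 2 * sqrt s) x = 1 / sqrt (2 * pi * s) * exp (b\<^sup>2 * s + - x\<^sup>2 / (4 * s))"
    using s by (simp add: normal_density_def mult_exp_exp power_mult_distrib)
  show ?thesis unfolding lhs rhs
    by (intro mult_left_mono) (use key s in auto)
qed

lemma nn_integral_normal_density: "0 < \<sigma> \<Longrightarrow> (\<integral>\<^sup>+x. ennreal (normal_density \<mu> \<sigma> x) \<partial>lborel) = 1"
  by (subst nn_integral_eq_integral) (auto intro: integrable_normal_density simp: integral_normal_density)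

lemma exp_moment:
  assumes Wi: "wiener_process_on M {t0..T} W" and t: "t \<in> {t0..T}" and b: "0 \<le> b"
  shows "(\<integral>\<^sup>+\<omega>. ennreal (exp (b * \<bar>W t \<omega> - W t0 \<omega>\<bar>)) \<partial>M) \<le> ennreal (sqrt 2 * exp (b\<^sup>2 * (T - t0)))"
proof -
  have P: "prob_space M" using Wi by (simp add: wiener_process_on_def)
  have ge1: "1 \<le> sqrt 2 * exp (b\<^sup>2 * (T - t0))"
  proof -
    have "1 \<le> sqrt (2::real)" by simp
    moreover have "1 \<le> exp (b\<^sup>2 * (T - t0))" using t by simp
    ultimately show ?thesis by (metis mult_mono' mult_1 zero_le_one)
  qed
  show ?thesis
  proof (cases "t = t0")
    case True
    then have "(\<integral>\<^sup>+\<omega>. ennreal (exp (b * \<bar>W t \<omega> - W t0 \<omega>\<bar>)) \<partial>M) = (\<integral>\<^sup>+\<omega>. 1 \<partial>M)" by simp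
    also have "\<dots> = 1" using P by (simp add: prob_space.emeasure_space_1)
    also have "\<dots> \<le> ennreal (sqrt 2 * exp (b\<^sup>2 * (T - t0)))" using ge1 by simp
    finally show ?thesis .
  next
    case False
    with t have lt: "t0 < t" by auto
    have t0in: "t0 \<in> {t0..T}" using t by auto
    have D: "distributed M lborel (\<lambda>\<omega>. W t \<omega> - W t0 \<omega>) (\<lambda>x. ennreal (normal_density 0 (sqrt (t - t0)) x))"
      using Wi t t0in lt unfolding wiener_process_on_def by blast
    define s where "s = t - t0"
    have s: "0 < s" using lt by (simp add: s_def)
    have "(\<integral>\<^sup>+\<omega>. ennreal (exp (b * \<bar>W t \<omega> - W t0 \<omega>\<bar>)) \<partial>M)
        = (\<integral>\<^sup>+x. ennreal (normal_density 0 (sqrt s) x) * ennreal (exp (b * \<bar>x\<bar>)) \<partial>lborel)"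
      unfolding s_def by (subst distributed_nn_integral[OF D]) auto
    also have "\<dots> \<le> (\<integral>\<^sup>+x. ennreal (sqrt 2 * exp (b\<^sup>2 * s)) * ennreal (normal_density 0 (sqrt 2 * sqrt s) x) \<partial>lborel)"
    proof (rule nn_integral_mono)
      fix x
      have "ennreal (normal_density 0 (sqrt s) x) * ennreal (exp (b * \<bar>x\<bar>)) = ennreal (normal_density 0 (sqrt s) x * exp (b * \<bar>x\<bar>))"
        by (simp add: ennreal_mult)
      also have "\<dots> \<le> ennreal (sqrt 2 * exp (b\<^sup>2 * s) * normal_density 0 (sqrt 2 * sqrt s) x)"
        by (intro ennreal_leI gauss_pointwise s b)
      also have "\<dots> = ennreal (sqrt 2 * exp (b\<^sup>2 * s)) * ennreal (normal_density 0 (sqrt 2 * sqrt s) x)"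
        by (simp add: ennreal_mult)
      finally show "ennreal (normal_density 0 (sqrt s) x) * ennreal (exp (b * \<bar>x\<bar>)) \<le> ennreal (sqrt 2 * exp (b\<^sup>2 * s)) * ennreal (normal_density 0 (sqrt 2 * sqrt s) x)" .
    qed
    also have "\<dots> = ennreal (sqrt 2 * exp (b\<^sup>2 * s))"
      using s by (subst nn_integral_cmult) (auto simp: nn_integral_normal_density)
    also have "\<dots> \<le> ennreal (sqrt 2 * exp (b\<^sup>2 * (T - t0)))"
      using t by (intro ennreal_leI mult_left_mono) (auto simp: s_def intro!: mult_left_mono)
    finally show ?thesis .
  qed
qed



theorem lemma2:
  fixes M :: "'a measure"
    and t0 T :: real and MM :: nat and \<gamma> :: real and p :: real
    and A :: "nat \<Rightarrow> real^'d^'d"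
    and W :: "nat \<Rightarrow> real \<Rightarrow> 'a \<Rightarrow> real"
    and X :: "real \<Rightarrow> 'a \<Rightarrow> real^'d"
    and V :: "nat \<Rightarrow> nat \<Rightarrow> 'a \<Rightarrow> real^'d"
    and L0 :: "real \<Rightarrow> 'a \<Rightarrow> real^'d^'d"
    and V0 :: "real \<Rightarrow> 'a \<Rightarrow> real^'d"
    and h :: "nat \<Rightarrow> real" and tt :: "nat \<Rightarrow> nat \<Rightarrow> real"
  assumes P: "prob_space M"
    and tT: "t0 < T"
    and MM: "MM \<ge> 1"
    and gam: "\<gamma> = 0 \<or> \<gamma> = 1 / 2"
    and Wien: "\<And>m. m \<in> {1..MM} \<Longrightarrow> wiener_process_on M {t0..T} (W m)"
    and Windep: "prob_space.indep_vars M (\<lambda>_. Pi\<^sub>M {t0..T} (\<lambda>_. borel))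
                    (\<lambda>m \<omega>. \<lambda>t\<in>{t0..T}. W m t \<omega>) {1..MM}"
    and comm: "\<And>i j. i \<le> MM \<Longrightarrow> j \<le> MM \<Longrightarrow> A i ** A j = A j ** A i"
    and Xmeas: "\<And>t. t \<in> {t0..T} \<Longrightarrow> X t \<in> borel_measurable M"
    and h_def: "\<And>N. h N = (T - t0) / real N"
    and tt_def: "\<And>N n. tt N n = t0 + real n * h N"
    and L0_def: "\<And>t \<omega>. L0 t \<omega> =
        (t - t0) *\<^sub>R (A 0 - \<gamma> *\<^sub>R (\<Sum>m\<in>{1..MM}. A m ** A m))
        + (\<Sum>m\<in>{1..MM}. (W m t \<omega> - W m t0 \<omega>) *\<^sub>R A m)"
    and V0_def: "\<And>t \<omega>. V0 t \<omega> = mat_exp (- L0 t \<omega>) *v X t \<omega>"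
    and Vmeas: "\<And>N n. N \<ge> 1 \<Longrightarrow> n \<le> N \<Longrightarrow> V N n \<in> borel_measurable M"
    and order: "\<exists>c::real. \<forall>N\<ge>1. \<forall>n\<le>N.
        integrable M (\<lambda>\<omega>. (norm (V N n \<omega> - V0 (tt N n) \<omega>))\<^sup>2) \<and>
        sqrt (\<integral>\<omega>. (norm (V N n \<omega> - V0 (tt N n) \<omega>))\<^sup>2 \<partial>M) \<le> c * h N powr p"
  shows "\<exists>c'::real. \<forall>N\<ge>1. \<forall>n\<le>N.
        (\<integral>\<^sup>+\<omega>. ennreal (norm (mat_exp (L0 (tt N n) \<omega>) *v V N n \<omega> - X (tt N n) \<omega>)) \<partial>M)
          \<le> ennreal (c' * h N powr p)"
proof -
  obtain c where c: "\<forall>N\<ge>1. \<forall>n\<le>N.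
        integrable M (\<lambda>\<omega>. (norm (V N n \<omega> - V0 (tt N n) \<omega>))\<^sup>2) \<and>
        sqrt (\<integral>\<omega>. (norm (V N n \<omega> - V0 (tt N n) \<omega>))\<^sup>2 \<partial>M) \<le> c * h N powr p"
    using order by blast
  define c1 where "c1 = max c 1"
  define \<kappa> where "\<kappa> = real CARD('d)^3"
  define I1 where "I1 = norm (mat 1 :: real^'d^'d)"
  define Bm where "Bm = A 0 - \<gamma> *\<^sub>R (\<Sum>m\<in>{1..MM}. A m ** A m)"
  define \<beta> where "\<beta> = (T - t0) * norm Bm"
  define C1 where "C1 = \<kappa> * I1 * exp (\<kappa> * \<beta>)"
  define bm where "bm = (\<lambda>m. real MM * (2 * \<kappa> * norm (A m)))"
  define B0 where "B0 = (\<Sum>m\<in>{1..MM}. sqrt 2 * exp ((bm m)\<^sup>2 * (T - t0)))"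
  have \<kappa>pos: "0 < \<kappa>" unfolding \<kappa>_def by simp
  have I1nn: "0 \<le> I1" unfolding I1_def by simp
  have C1nn: "0 \<le> C1" unfolding C1_def using \<kappa>pos I1nn by simp
  have B0nn: "0 \<le> B0" unfolding B0_def by (intro sum_nonneg) simp
  have bmnn: "0 \<le> bm m" for m unfolding bm_def using \<kappa>pos by simp
  have c1: "1 \<le> c1" "c \<le> c1" unfolding c1_def by auto
  have t0in: "t0 \<in> {t0..T}" using tT by simp
  have Wmeas: "W m s \<in> borel_measurable M" if "m \<in> {1..MM}" "s \<in> {t0..T}" for m s
    using Wien[OF that(1)] that(2) unfolding wiener_process_on_def by blast
  show ?thesis
  proof (intro exI[of _ "C1 * (B0 + 1) / 2 * c1"] allI impI)
    fix N n :: nat assume N: "1 \<le> N" and n: "n \<le> N"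
    define t where "t = tt N n"
    have hpos: "0 < h N" using h_def tT N by simp
    have tin: "t \<in> {t0..T}"
    proof -
      have "real n * h N \<le> real N * h N" using n hpos by (intro mult_right_mono) auto
      also have "real N * h N = T - t0" using N h_def by simp
      finally show ?thesis using hpos unfolding t_def tt_def by simp
    qed
    define hp where "hp = h N powr p"
    have hp: "0 < hp" using hpos by (simp add: hp_def)
    define a where "a = c1 * hp"
    have a: "0 < a" unfolding a_def using hp c1 by simp
    define D where "D = (\<lambda>\<omega>. norm (V N n \<omega> - V0 t \<omega>))"
    define Q where "Q = (\<lambda>\<omega>. (D \<omega>)\<^sup>2)"
    define H where "H = (\<lambda>\<omega>. \<Sum>m\<in>{1..MM}. exp (bm m * \<bar>W m t \<omega> - W m t0 \<omega>\<bar>))"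
    have intQ: "integrable M Q" and sq: "sqrt (\<integral>\<omega>. Q \<omega> \<partial>M) \<le> c * hp"
      using c N n by (auto simp: D_def Q_def t_def hp_def)
    have IQ: "(\<integral>\<omega>. Q \<omega> \<partial>M) \<le> a\<^sup>2"
    proof -
      have nn: "0 \<le> (\<integral>\<omega>. Q \<omega> \<partial>M)" unfolding Q_def by simp
      have "sqrt (\<integral>\<omega>. Q \<omega> \<partial>M) \<le> a"
        using sq c1 hp unfolding a_def by (meson mult_right_mono less_imp_le order_trans)
      then have "(sqrt (\<integral>\<omega>. Q \<omega> \<partial>M))\<^sup>2 \<le> a\<^sup>2" using nn by (intro power_mono) auto
      then show ?thesis using nn by simp
    qed
    have Qmeas: "Q \<in> borel_measurable M" using intQ by auto
    have Tm: "(\<lambda>\<omega>. exp (bm m * \<bar>W m t \<omega> - W m t0 \<omega>\<bar>)) \<in> borel_measurable M" if m: "m \<in> {1..MM}" for m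
    proof -
      note [measurable] = Wmeas[OF m tin] Wmeas[OF m t0in]
      show ?thesis by measurable
    qed
    have Hmeas: "H \<in> borel_measurable M" unfolding H_def
      by (intro borel_measurable_sum Tm)
    have IH: "(\<integral>\<^sup>+\<omega>. ennreal (H \<omega>) \<partial>M) \<le> ennreal B0"
    proof -
      have "(\<integral>\<^sup>+\<omega>. ennreal (H \<omega>) \<partial>M) = (\<integral>\<^sup>+\<omega>. (\<Sum>m\<in>{1..MM}. ennreal (exp (bm m * \<bar>W m t \<omega> - W m t0 \<omega>\<bar>))) \<partial>M)"
        by (simp add: H_def)
      also have "\<dots> = (\<Sum>m\<in>{1..MM}. (\<integral>\<^sup>+\<omega>. ennreal (exp (bm m * \<bar>W m t \<omega> - W m t0 \<omega>\<bar>)) \<partial>M))"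
        by (intro nn_integral_sum measurable_compose[OF Tm measurable_ennreal])
      also have "\<dots> \<le> (\<Sum>m\<in>{1..MM}. ennreal (sqrt 2 * exp ((bm m)\<^sup>2 * (T - t0))))"
        by (intro sum_mono exp_moment Wien tin bmnn)
      also have "\<dots> = ennreal B0" by (simp add: B0_def)
      finally show ?thesis .
    qed
    have IQn: "(\<integral>\<^sup>+\<omega>. ennreal (Q \<omega>) \<partial>M) = ennreal (\<integral>\<omega>. Q \<omega> \<partial>M)"
      by (rule nn_integral_eq_integral[OF intQ]) (simp add: Q_def)
    have pw: "ennreal (norm (mat_exp (L0 t \<omega>) *v V N n \<omega> - X t \<omega>))
        \<le> ennreal (C1 * a / 2) * ennreal (H \<omega>) + ennreal (C1 / (2 * a)) * ennreal (Q \<omega>)" for \<omega>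
    proof -
      let ?L = "L0 t \<omega>"
      have Xe: "mat_exp ?L *v V0 t \<omega> = X t \<omega>" by (simp add: V0_def matexp_cancel)
      have eq: "mat_exp ?L *v V N n \<omega> - X t \<omega> = mat_exp ?L *v (V N n \<omega> - V0 t \<omega>)"
        using Xe by (simp add: matrix_vector_mult_diff_distrib)
      define S where "S = (\<Sum>m\<in>{1..MM}. \<bar>W m t \<omega> - W m t0 \<omega>\<bar> * norm (A m))"
      have S: "0 \<le> S" unfolding S_def by (intro sum_nonneg) simp
      have nL: "norm ?L \<le> \<beta> + S"
      proof -
        have "norm ?L \<le> norm ((t - t0) *\<^sub>R Bm) + norm (\<Sum>m\<in>{1..MM}. (W m t \<omega> - W m t0 \<omega>) *\<^sub>R A m)"
          unfolding L0_def Bm_def by (rule norm_triangle_ineq)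
        also have "norm ((t - t0) *\<^sub>R Bm) \<le> \<beta>"
          using tin unfolding \<beta>_def by (auto intro!: mult_right_mono)
        also have "norm (\<Sum>m\<in>{1..MM}. (W m t \<omega> - W m t0 \<omega>) *\<^sub>R A m) \<le> S"
          unfolding S_def by (rule order_trans[OF norm_sum]) simp
        finally show ?thesis by simp
      qed
      define G where "G = exp (\<kappa> * S)"
      have G: "0 \<le> G" unfolding G_def by simp
      have "norm (mat_exp ?L *v V N n \<omega> - X t \<omega>) \<le> \<kappa> * I1 * exp (\<kappa> * norm ?L) * D \<omega>"
        unfolding eq D_def \<kappa>_def I1_def by (rule norm_matexp_mv)
      also have "exp (\<kappa> * norm ?L) \<le> exp (\<kappa> * \<beta>) * G"
      proof -
        have "exp (\<kappa> * norm ?L) \<le> exp (\<kappa> * (\<beta> + S))" using nL \<kappa>pos by simp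
        also have "\<dots> = exp (\<kappa> * \<beta>) * G" by (simp add: G_def distrib_left exp_add)
        finally show ?thesis .
      qed
      finally have n1: "norm (mat_exp ?L *v V N n \<omega> - X t \<omega>) \<le> C1 * G * D \<omega>"
        using \<kappa>pos I1nn by (simp add: C1_def D_def mult_left_mono mult_right_mono mult_ac)
      have G2: "G\<^sup>2 \<le> H \<omega>"
      proof -
        have "G\<^sup>2 = exp (\<Sum>m\<in>{1..MM}. 2 * \<kappa> * (\<bar>W m t \<omega> - W m t0 \<omega>\<bar> * norm (A m)))"
          unfolding G_def S_def by (simp add: exp_double[symmetric] sum_distrib_left mult_ac)
        also have "\<dots> \<le> (\<Sum>m\<in>{1..MM}. exp (real (card {1..MM}) * (2 * \<kappa> * (\<bar>W m t \<omega> - W m t0 \<omega>\<bar> * norm (A m)))))"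
          using MM \<kappa>pos by (intro exp_sum_le) auto
        also have "\<dots> = H \<omega>" unfolding H_def bm_def by (simp add: mult_ac)
        finally show ?thesis .
      qed
      have am: "2 * G * D \<omega> \<le> a * G\<^sup>2 + Q \<omega> / a"
      proof -
        have "a * G\<^sup>2 + Q \<omega> / a - 2 * G * D \<omega> = (a * G - D \<omega>)\<^sup>2 / a"
          using a by (simp add: Q_def field_simps power2_eq_square)
        moreover have "0 \<le> (a * G - D \<omega>)\<^sup>2 / a" using a by simp
        ultimately show ?thesis by linarith
      qed
      have "C1 * G * D \<omega> \<le> C1 * a / 2 * H \<omega> + C1 / (2 * a) * Q \<omega>"
      proof -
        have "2 * G * D \<omega> \<le> a * H \<omega> + Q \<omega> / a"
          using am G2 a by (smt (verit) mult_left_mono)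
        then have "C1 * (2 * G * D \<omega>) \<le> C1 * (a * H \<omega> + Q \<omega> / a)"
          using C1nn by (rule mult_left_mono)
        then show ?thesis by (simp add: field_simps)
      qed
      with n1 have "norm (mat_exp ?L *v V N n \<omega> - X t \<omega>) \<le> C1 * a / 2 * H \<omega> + C1 / (2 * a) * Q \<omega>"
        by linarith
      then have "ennreal (norm (mat_exp ?L *v V N n \<omega> - X t \<omega>)) \<le> ennreal (C1 * a / 2 * H \<omega> + C1 / (2 * a) * Q \<omega>)"
        by (rule ennreal_leI)
      also have "\<dots> = ennreal (C1 * a / 2) * ennreal (H \<omega>) + ennreal (C1 / (2 * a)) * ennreal (Q \<omega>)"
      proof -
        have Hn: "0 \<le> H \<omega>" unfolding H_def by (intro sum_nonneg) simp
        have Qn: "0 \<le> Q \<omega>" unfolding Q_def by simp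
        show ?thesis using Hn Qn C1nn a
          by (simp add: ennreal_mult[symmetric] ennreal_plus[symmetric] del: ennreal_plus)
      qed
      finally show ?thesis .
    qed
    have "(\<integral>\<^sup>+\<omega>. ennreal (norm (mat_exp (L0 t \<omega>) *v V N n \<omega> - X t \<omega>)) \<partial>M)
        \<le> (\<integral>\<^sup>+\<omega>. ennreal (C1 * a / 2) * ennreal (H \<omega>) + ennreal (C1 / (2 * a)) * ennreal (Q \<omega>) \<partial>M)"
      by (intro nn_integral_mono pw)
    also have "\<dots> = ennreal (C1 * a / 2) * (\<integral>\<^sup>+\<omega>. ennreal (H \<omega>) \<partial>M) + ennreal (C1 / (2 * a)) * (\<integral>\<^sup>+\<omega>. ennreal (Q \<omega>) \<partial>M)"
    proof -
      note [measurable] = Hmeas Qmeas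
      show ?thesis by (subst nn_integral_add) (measurable, simp add: nn_integral_cmult)
    qed
    also have "\<dots> \<le> ennreal (C1 * a / 2) * ennreal B0 + ennreal (C1 / (2 * a)) * ennreal (a\<^sup>2)"
      unfolding IQn by (intro add_mono mult_left_mono IH ennreal_leI IQ) auto
    also have "\<dots> = ennreal (C1 * a / 2 * B0 + C1 / (2 * a) * a\<^sup>2)"
      using C1nn a B0nn
      by (simp add: ennreal_mult[symmetric] ennreal_plus[symmetric] del: ennreal_plus)
    also have "C1 * a / 2 * B0 + C1 / (2 * a) * a\<^sup>2 = C1 * (B0 + 1) / 2 * c1 * h N powr p"
      using a unfolding a_def hp_def by (simp add: field_simps power2_eq_square)
    finally show "(\<integral>\<^sup>+\<omega>. ennreal (norm (mat_exp (L0 (tt N n) \<omega>) *v V N n \<omega> - X (tt N n) \<omega>)) \<partial>M)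
          \<le> ennreal (C1 * (B0 + 1) / 2 * c1 * h N powr p)"
      unfolding t_def .
  qed
qed

end
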